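(* Let $L$ be a loop and $n\ge 1$ an integer. For every $a\in L$ and every $F\in\gamma_n\mathrm{LMlt}(L)$, we have $F(a)\equiv a \pmod{D_nL}$, i.e. $F(a)$ and $a$ have the same image in the quotient loop $L/D_nL$.
   Context: A loop is a set $L$ with a binary product and a two-sided identity $e$ such that for each $a\in L$ the maps $L_a\colon x\mapsto ax$ and $R_a\colon x\mapsto xa$ are bijections. $\mathrm{LMlt}(L)$ is the group of permutations of $L$ generated by all $L_a$, $a\in L$. For a group $G$, $\gamma_1G=G$ and $\gamma_{k+1}G=[G,\gamma_kG]$. The loop algebra $\mathbb{Q}L$ has basis $L$ with the bilinearly extended product; the augmentation ideal $I$ is the kernel of the linear map $\mathbb{Q}L\to\mathbb{Q}$ sending each element of $L$ to $1$; $I^k$ is the ideal spanned by all products (any bracketing) of at least $k$ elements of $I$; and $D_kL=\{g\in L\mid g-1\in I^k\}$, which is a normal subloop of $L$. *)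

theory Defs
  imports "HOL-Algebra.Bij" "HOL-Algebra.Generated_Groups" Complex_Main
begin

definition is_loop :: "'a set \<Rightarrow> ('a \<Rightarrow> 'a \<Rightarrow> 'a) \<Rightarrow> 'a \<Rightarrow> bool" where
  "is_loop L pr e \<longleftrightarrow>
     e \<in> L \<and> (\<forall>x\<in>L. \<forall>y\<in>L. pr x y \<in> L) \<and>
     (\<forall>x\<in>L. pr e x = x \<and> pr x e = x) \<and>
     (\<forall>a\<in>L. bij_betw (\<lambda>x. pr a x) L L \<and> bij_betw (\<lambda>x. pr x a) L L)"

definition ltrans :: "'a set \<Rightarrow> ('a \<Rightarrow> 'a \<Rightarrow> 'a) \<Rightarrow> 'a \<Rightarrow> ('a \<Rightarrow> 'a)" where
  "ltrans L pr a = (\<lambda>x\<in>L. pr a x)"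

definition LMlt :: "'a set \<Rightarrow> ('a \<Rightarrow> 'a \<Rightarrow> 'a) \<Rightarrow> ('a \<Rightarrow> 'a) set" where
  "LMlt L pr = generate (BijGroup L) (ltrans L pr ` L)"

definition comm_subgroup :: "('g, 'b) monoid_scheme \<Rightarrow> 'g set \<Rightarrow> 'g set \<Rightarrow> 'g set" where
  "comm_subgroup G A B =
     generate G (\<Union>a\<in>A. \<Union>b\<in>B. {inv\<^bsub>G\<^esub> a \<otimes>\<^bsub>G\<^esub> inv\<^bsub>G\<^esub> b \<otimes>\<^bsub>G\<^esub> a \<otimes>\<^bsub>G\<^esub> b})"

(* lower central series of a subgroup H of an ambient group G, indexed from 1:
   lcs G H 1 = H, lcs G H (k+1) = [H, lcs G H k] *)
fun lcs :: "('g, 'b) monoid_scheme \<Rightarrow> 'g set \<Rightarrow> nat \<Rightarrow> 'g set" where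
  "lcs G H 0 = H"
| "lcs G H (Suc 0) = H"
| "lcs G H (Suc (Suc k)) = comm_subgroup G H (lcs G H (Suc k))"

(* Loop algebra QL: finitely supported functions L \<rightarrow> rat (zero outside L) *)
definition QL :: "'a set \<Rightarrow> ('a \<Rightarrow> rat) set" where
  "QL L = {f. finite {x. f x \<noteq> 0} \<and> {x. f x \<noteq> 0} \<subseteq> L}"

definition bas :: "'a \<Rightarrow> ('a \<Rightarrow> rat)" where
  "bas g = (\<lambda>x. if x = g then 1 else 0)"

definition qprod :: "('a \<Rightarrow> 'a \<Rightarrow> 'a) \<Rightarrow> ('a \<Rightarrow> rat) \<Rightarrow> ('a \<Rightarrow> rat) \<Rightarrow> ('a \<Rightarrow> rat)" where
  "qprod pr f g = (\<lambda>z. \<Sum>x\<in>{x. f x \<noteq> 0}. \<Sum>y\<in>{y. g y \<noteq> 0}.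
                         if pr x y = z then f x * g y else 0)"

definition aug_ideal :: "'a set \<Rightarrow> ('a \<Rightarrow> rat) set" where
  "aug_ideal L = {f \<in> QL L. (\<Sum>x\<in>{x. f x \<noteq> 0}. f x) = 0}"

(* products, in any bracketing, of exactly k elements of I *)
inductive bprods :: "'a set \<Rightarrow> ('a \<Rightarrow> 'a \<Rightarrow> 'a) \<Rightarrow> nat \<Rightarrow> ('a \<Rightarrow> rat) \<Rightarrow> bool"
  for L pr where
  single: "x \<in> aug_ideal L \<Longrightarrow> bprods L pr 1 x"
| prod: "bprods L pr i x \<Longrightarrow> bprods L pr j y \<Longrightarrow> bprods L pr (i + j) (qprod pr x y)"

inductive_set gen_ideal :: "'a set \<Rightarrow> ('a \<Rightarrow> 'a \<Rightarrow> 'a) \<Rightarrow> ('a \<Rightarrow> rat) set \<Rightarrow> ('a \<Rightarrow> rat) set"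
  for L pr S where
  gen: "x \<in> S \<Longrightarrow> x \<in> gen_ideal L pr S"
| zero: "(\<lambda>_. 0) \<in> gen_ideal L pr S"
| add: "x \<in> gen_ideal L pr S \<Longrightarrow> y \<in> gen_ideal L pr S \<Longrightarrow> (\<lambda>z. x z + y z) \<in> gen_ideal L pr S"
| smult: "x \<in> gen_ideal L pr S \<Longrightarrow> (\<lambda>z. c * x z) \<in> gen_ideal L pr S"
| lmult: "x \<in> gen_ideal L pr S \<Longrightarrow> a \<in> QL L \<Longrightarrow> qprod pr a x \<in> gen_ideal L pr S"
| rmult: "x \<in> gen_ideal L pr S \<Longrightarrow> a \<in> QL L \<Longrightarrow> qprod pr x a \<in> gen_ideal L pr S"

definition aug_pow :: "'a set \<Rightarrow> ('a \<Rightarrow> 'a \<Rightarrow> 'a) \<Rightarrow> nat \<Rightarrow> ('a \<Rightarrow> rat) set" where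
  "aug_pow L pr k = gen_ideal L pr {x. \<exists>i\<ge>k. bprods L pr i x}"

definition Dsub :: "'a set \<Rightarrow> ('a \<Rightarrow> 'a \<Rightarrow> 'a) \<Rightarrow> 'a \<Rightarrow> nat \<Rightarrow> 'a set" where
  "Dsub L pr e k = {g \<in> L. (\<lambda>z. bas g z - bas e z) \<in> aug_pow L pr k}"

(* left coset xN; for a normal subloop N the quotient L/N consists of these cosets *)
definition lcoset :: "('a \<Rightarrow> 'a \<Rightarrow> 'a) \<Rightarrow> 'a \<Rightarrow> 'a set \<Rightarrow> 'a set" where
  "lcoset pr x N = (\<lambda>d. pr x d) ` N"

end

theory Submission imports Defs "HOL-Library.Function_Algebras" begin

definition supp :: "('a \<Rightarrow> rat) \<Rightarrow> 'a set" where "supp f = {x. f x \<noteq> 0}"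
definition sc :: "rat \<Rightarrow> ('a \<Rightarrow> rat) \<Rightarrow> ('a \<Rightarrow> rat)" where "sc c f = (\<lambda>z. c * f z)"

lemma QL_iff: "f \<in> QL L \<longleftrightarrow> finite (supp f) \<and> supp f \<subseteq> L"
  by (simp add: QL_def supp_def)

lemma qprod_eq:
  assumes "finite S" "finite T" "supp f \<subseteq> S" "supp g \<subseteq> T"
  shows "qprod pr f g = (\<lambda>z. \<Sum>x\<in>S. \<Sum>y\<in>T. if pr x y = z then f x * g y else 0)"
proof
  fix z
  have "qprod pr f g z = (\<Sum>x\<in>supp f. \<Sum>y\<in>supp g. if pr x y = z then f x * g y else 0)"
    by (simp add: qprod_def supp_def)
  also have "\<dots> = (\<Sum>x\<in>supp f. \<Sum>y\<in>T. if pr x y = z then f x * g y else 0)"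
    apply (rule sum.cong[OF refl])
    apply (rule sum.mono_neutral_left)
    using assms by (auto simp: supp_def)
  also have "\<dots> = (\<Sum>x\<in>S. \<Sum>y\<in>T. if pr x y = z then f x * g y else 0)"
    apply (rule sum.mono_neutral_left)
    using assms by (auto simp: supp_def intro!: sum.neutral split: if_splits)
  finally show "qprod pr f g z = (\<Sum>x\<in>S. \<Sum>y\<in>T. if pr x y = z then f x * g y else 0)" .
qed

lemma supp_add: "supp (f + g) \<subseteq> supp f \<union> supp g" by (auto simp: supp_def)
lemma supp_diff: "supp (f - g) \<subseteq> supp f \<union> supp g" by (auto simp: supp_def)
lemma supp_sc: "supp (sc c f) \<subseteq> supp f" by (auto simp: supp_def sc_def)
lemma supp_bas: "supp (bas a) = {a}" by (auto simp: supp_def bas_def)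

definition fs :: "('a \<Rightarrow> rat) \<Rightarrow> bool" where "fs f = finite (supp f)"

lemma fs_add: "fs f \<Longrightarrow> fs g \<Longrightarrow> fs (f + g)" unfolding fs_def by (meson finite_Un finite_subset supp_add)
lemma fs_diff: "fs f \<Longrightarrow> fs g \<Longrightarrow> fs (f - g)" unfolding fs_def by (meson finite_Un finite_subset supp_diff)
lemma fs_sc: "fs f \<Longrightarrow> fs (sc c f)" unfolding fs_def by (meson finite_subset supp_sc)
lemma bas_same: "bas a a = 1" by (simp add: bas_def)
lemma fs_bas: "fs (bas a)" unfolding fs_def by (simp add: supp_bas)

lemma qprod_add_left:
  assumes "fs f1" "fs f2" "fs g"
  shows "qprod pr (f1 + f2) g = qprod pr f1 g + qprod pr f2 g"
proof -
  let ?S = "supp f1 \<union> supp f2"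
  have fin: "finite ?S" "finite (supp g)" using assms by (auto simp: fs_def)
  have e0: "qprod pr (f1+f2) g = (\<lambda>z. \<Sum>x\<in>?S. \<Sum>y\<in>supp g. if pr x y = z then (f1+f2) x * g y else 0)"
    by (rule qprod_eq[OF fin]) (auto simp: supp_def)
  have e1: "qprod pr f1 g = (\<lambda>z. \<Sum>x\<in>?S. \<Sum>y\<in>supp g. if pr x y = z then f1 x * g y else 0)"
    by (rule qprod_eq[OF fin]) auto
  have e2: "qprod pr f2 g = (\<lambda>z. \<Sum>x\<in>?S. \<Sum>y\<in>supp g. if pr x y = z then f2 x * g y else 0)"
    by (rule qprod_eq[OF fin]) auto
  show ?thesis unfolding e0 e1 e2
    by (simp add: fun_eq_iff sum.distrib[symmetric] distrib_right if_distrib cong: if_cong)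
qed

lemma qprod_add_right:
  assumes "fs f" "fs g1" "fs g2"
  shows "qprod pr f (g1 + g2) = qprod pr f g1 + qprod pr f g2"
proof -
  let ?T = "supp g1 \<union> supp g2"
  have fin: "finite (supp f)" "finite ?T" using assms by (auto simp: fs_def)
  have e0: "qprod pr f (g1+g2) = (\<lambda>z. \<Sum>x\<in>supp f. \<Sum>y\<in>?T. if pr x y = z then f x * (g1+g2) y else 0)"
    by (rule qprod_eq[OF fin]) (auto simp: supp_def)
  have e1: "qprod pr f g1 = (\<lambda>z. \<Sum>x\<in>supp f. \<Sum>y\<in>?T. if pr x y = z then f x * g1 y else 0)"
    by (rule qprod_eq[OF fin]) auto
  have e2: "qprod pr f g2 = (\<lambda>z. \<Sum>x\<in>supp f. \<Sum>y\<in>?T. if pr x y = z then f x * g2 y else 0)"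
    by (rule qprod_eq[OF fin]) auto
  show ?thesis unfolding e0 e1 e2
    by (simp add: fun_eq_iff sum.distrib[symmetric] distrib_left if_distrib cong: if_cong)
qed

lemma qprod_sc_left:
  assumes "fs f" "fs g"
  shows "qprod pr (sc c f) g = sc c (qprod pr f g)"
proof -
  have fin: "finite (supp f)" "finite (supp g)" using assms by (auto simp: fs_def)
  have e0: "qprod pr (sc c f) g = (\<lambda>z. \<Sum>x\<in>supp f. \<Sum>y\<in>supp g. if pr x y = z then sc c f x * g y else 0)"
    by (rule qprod_eq[OF fin]) (auto simp: supp_def sc_def)
  have e1: "qprod pr f g = (\<lambda>z. \<Sum>x\<in>supp f. \<Sum>y\<in>supp g. if pr x y = z then f x * g y else 0)"
    by (rule qprod_eq[OF fin]) auto
  show ?thesis unfolding e0 e1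
    by (simp add: fun_eq_iff sc_def sum_distrib_left if_distrib mult.assoc cong: if_cong)
qed

lemma qprod_sc_right:
  assumes "fs f" "fs g"
  shows "qprod pr f (sc c g) = sc c (qprod pr f g)"
proof -
  have fin: "finite (supp f)" "finite (supp g)" using assms by (auto simp: fs_def)
  have e0: "qprod pr f (sc c g) = (\<lambda>z. \<Sum>x\<in>supp f. \<Sum>y\<in>supp g. if pr x y = z then f x * sc c g y else 0)"
    by (rule qprod_eq[OF fin]) (auto simp: supp_def sc_def)
  have e1: "qprod pr f g = (\<lambda>z. \<Sum>x\<in>supp f. \<Sum>y\<in>supp g. if pr x y = z then f x * g y else 0)"
    by (rule qprod_eq[OF fin]) auto
  show ?thesis unfolding e0 e1
    by (simp add: fun_eq_iff sc_def sum_distrib_left if_distrib mult.left_commute cong: if_cong)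
qed

lemma diff_as: "(f::'a\<Rightarrow>rat) - g = f + sc (-1) g" by (simp add: fun_eq_iff sc_def)

lemma qprod_diff_left:
  assumes "fs f1" "fs f2" "fs g"
  shows "qprod pr (f1 - f2) g = qprod pr f1 g - qprod pr f2 g"
  using assms by (simp add: diff_as qprod_add_left qprod_sc_left fs_sc)

lemma qprod_diff_right:
  assumes "fs f" "fs g1" "fs g2"
  shows "qprod pr f (g1 - g2) = qprod pr f g1 - qprod pr f g2"
  using assms by (simp add: diff_as qprod_add_right qprod_sc_right fs_sc)

lemma qprod_zero_right: "fs f \<Longrightarrow> qprod pr f 0 = 0"
  by (simp add: qprod_def fun_eq_iff supp_def)
lemma qprod_zero_left: "qprod pr 0 g = 0"
  by (simp add: qprod_def fun_eq_iff)

lemma qprod_bas_bas: "qprod pr (bas a) (bas b) = bas (pr a b)"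
proof -
  have "qprod pr (bas a) (bas b) = (\<lambda>z. \<Sum>x\<in>{a}. \<Sum>y\<in>{b}. if pr x y = z then bas a x * bas b y else 0)"
    by (rule qprod_eq) (auto simp: supp_bas)
  then show ?thesis by (auto simp: bas_def fun_eq_iff)
qed

lemma qprod_bas_left:
  assumes "fs g"
  shows "qprod pr (bas a) g = (\<lambda>z. \<Sum>y\<in>supp g. if pr a y = z then g y else 0)"
proof -
  have eq: "qprod pr (bas a) g = (\<lambda>z. \<Sum>x\<in>{a}. \<Sum>y\<in>supp g. if pr x y = z then bas a x * g y else 0)"
    by (rule qprod_eq) (use assms in \<open>auto simp: supp_bas fs_def\<close>)
  show ?thesis unfolding eq by (simp add: bas_same cong: if_cong)
qed

lemma qprod_bas_right:
  assumes "fs g"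
  shows "qprod pr g (bas a) = (\<lambda>z. \<Sum>y\<in>supp g. if pr y a = z then g y else 0)"
proof -
  have eq: "qprod pr g (bas a) = (\<lambda>z. \<Sum>x\<in>supp g. \<Sum>y\<in>{a}. if pr x y = z then g x * bas a y else 0)"
    by (rule qprod_eq) (use assms in \<open>auto simp: supp_bas fs_def\<close>)
  show ?thesis unfolding eq by (simp add: bas_same cong: if_cong)
qed


lemma gi_add: "x \<in> gen_ideal L pr S \<Longrightarrow> y \<in> gen_ideal L pr S \<Longrightarrow> x + y \<in> gen_ideal L pr S"
  using gen_ideal.add[of x L pr S y] by (simp add: plus_fun_def)
lemma gi_sc: "x \<in> gen_ideal L pr S \<Longrightarrow> sc c x \<in> gen_ideal L pr S"
  using gen_ideal.smult[of x L pr S c] by (simp add: sc_def)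
lemma gi_zero: "0 \<in> gen_ideal L pr S"
  using gen_ideal.zero[of L pr S] by (simp add: zero_fun_def)
lemma gi_diff: "x \<in> gen_ideal L pr S \<Longrightarrow> y \<in> gen_ideal L pr S \<Longrightarrow> x - y \<in> gen_ideal L pr S"
  by (simp add: diff_as gi_add gi_sc)

lemma gen_ideal_mono: "S \<subseteq> T \<Longrightarrow> gen_ideal L pr S \<subseteq> gen_ideal L pr T"
proof
  fix x assume ST: "S \<subseteq> T" and x: "x \<in> gen_ideal L pr S"
  from x show "x \<in> gen_ideal L pr T"
    by (induction rule: gen_ideal.induct) (use ST in \<open>auto intro: gen_ideal.intros\<close>)
qed

inductive_set sp :: "('a \<Rightarrow> rat) set \<Rightarrow> ('a \<Rightarrow> rat) set" for S where
  gen: "x \<in> S \<Longrightarrow> x \<in> sp S"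
| zero: "0 \<in> sp S"
| add: "x \<in> sp S \<Longrightarrow> y \<in> sp S \<Longrightarrow> x + y \<in> sp S"
| smult: "x \<in> sp S \<Longrightarrow> sc c x \<in> sp S"

lemma QL_fs: "f \<in> QL L \<Longrightarrow> fs f" by (simp add: QL_iff fs_def)
lemma QL_add: "f \<in> QL L \<Longrightarrow> g \<in> QL L \<Longrightarrow> f + g \<in> QL L"
  unfolding QL_iff using supp_add by (metis finite_Un finite_subset le_sup_iff order_trans)
lemma QL_diff: "f \<in> QL L \<Longrightarrow> g \<in> QL L \<Longrightarrow> f - g \<in> QL L"
  unfolding QL_iff using supp_diff by (metis finite_Un finite_subset le_sup_iff order_trans)
lemma QL_sc: "f \<in> QL L \<Longrightarrow> sc c f \<in> QL L"
  unfolding QL_iff using supp_sc by (metis finite_subset order_trans)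
lemma QL_zero: "0 \<in> QL L" by (simp add: QL_iff supp_def)
lemma bas_QL: "a \<in> L \<Longrightarrow> bas a \<in> QL L" by (simp add: QL_iff supp_bas)

lemma supp_qprod: "supp (qprod pr f g) \<subseteq> (\<lambda>(x,y). pr x y) ` (supp f \<times> supp g)"
proof
  fix z assume "z \<in> supp (qprod pr f g)"
  then have "(\<Sum>x\<in>supp f. \<Sum>y\<in>supp g. if pr x y = z then f x * g y else 0) \<noteq> 0"
    by (simp add: supp_def qprod_def)
  then obtain x where x: "x \<in> supp f" and
      s1: "(\<Sum>y\<in>supp g. if pr x y = z then f x * g y else 0) \<noteq> 0"
    by (rule sum.not_neutral_contains_not_neutral)
  from s1 obtain y where y: "y \<in> supp g" and "(if pr x y = z then f x * g y else 0) \<noteq> 0"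
    by (rule sum.not_neutral_contains_not_neutral)
  then have "pr x y = z" by (simp split: if_splits)
  with x y show "z \<in> (\<lambda>(x,y). pr x y) ` (supp f \<times> supp g)" by force
qed

locale lp =
  fixes L :: "'a set" and pr :: "'a \<Rightarrow> 'a \<Rightarrow> 'a" and e :: 'a
  assumes loop: "is_loop L pr e"
begin

lemma e_in: "e \<in> L" using loop by (simp add: is_loop_def)
lemma pr_in: "x \<in> L \<Longrightarrow> y \<in> L \<Longrightarrow> pr x y \<in> L" using loop by (simp add: is_loop_def)
lemma e_left: "x \<in> L \<Longrightarrow> pr e x = x" using loop by (simp add: is_loop_def)
lemma e_right: "x \<in> L \<Longrightarrow> pr x e = x" using loop by (simp add: is_loop_def)
lemma lbij: "a \<in> L \<Longrightarrow> bij_betw (\<lambda>x. pr a x) L L" using loop by (simp add: is_loop_def)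

lemma QL_qprod: "f \<in> QL L \<Longrightarrow> g \<in> QL L \<Longrightarrow> qprod pr f g \<in> QL L"
proof -
  assume f: "f \<in> QL L" and g: "g \<in> QL L"
  have "(\<lambda>(x,y). pr x y) ` (supp f \<times> supp g) \<subseteq> L"
    using f g pr_in by (auto simp: QL_iff)
  moreover have "finite ((\<lambda>(x,y). pr x y) ` (supp f \<times> supp g))"
    using f g by (simp add: QL_iff)
  ultimately show ?thesis using supp_qprod[of pr f g] unfolding QL_iff
    by (meson finite_subset order_trans)
qed

lemma qprod_e_left: "g \<in> QL L \<Longrightarrow> qprod pr (bas e) g = g"
proof -
  assume g: "g \<in> QL L"
  have "(\<Sum>y\<in>supp g. if pr e y = z then g y else 0) = g z" for z
  proof -
    have "(\<Sum>y\<in>supp g. if pr e y = z then g y else 0) = (\<Sum>y\<in>supp g. if y = z then g y else 0)"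
      apply (rule sum.cong[OF refl]) using g e_left by (auto simp: QL_iff)
    also have "\<dots> = g z" using g by (auto simp: QL_iff supp_def)
    finally show ?thesis .
  qed
  then show ?thesis using qprod_bas_left[OF QL_fs[OF g]] by auto
qed

lemma qprod_e_right: "g \<in> QL L \<Longrightarrow> qprod pr g (bas e) = g"
proof -
  assume g: "g \<in> QL L"
  have "(\<Sum>y\<in>supp g. if pr y e = z then g y else 0) = g z" for z
  proof -
    have "(\<Sum>y\<in>supp g. if pr y e = z then g y else 0) = (\<Sum>y\<in>supp g. if y = z then g y else 0)"
      apply (rule sum.cong[OF refl]) using g e_right by (auto simp: QL_iff)
    also have "\<dots> = g z" using g by (auto simp: QL_iff supp_def)
    finally show ?thesis .
  qed
  then show ?thesis using qprod_bas_right[OF QL_fs[OF g]] by auto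
qed

lemma aug_I:
  assumes "f \<in> QL L" "finite S" "supp f \<subseteq> S" "(\<Sum>x\<in>S. f x) = 0"
  shows "f \<in> aug_ideal L"
proof -
  have "(\<Sum>x\<in>{x. f x \<noteq> 0}. f x) = (\<Sum>x\<in>S. f x)"
    apply (rule sum.mono_neutral_left) using assms by (auto simp: supp_def)
  then show ?thesis using assms by (simp add: aug_ideal_def)
qed

lemma aug_QL: "f \<in> aug_ideal L \<Longrightarrow> f \<in> QL L" by (simp add: aug_ideal_def)

lemma bas_diff_aug: "x \<in> L \<Longrightarrow> y \<in> L \<Longrightarrow> bas x - bas y \<in> aug_ideal L"
proof -
  assume x: "x \<in> L" and y: "y \<in> L"
  have s: "supp (bas x - bas y) \<subseteq> {x,y}"
    using supp_diff[of "bas x" "bas y"] by (auto simp: supp_bas)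
  have "(\<Sum>z\<in>{x,y}. (bas x - bas y) z) = 0"
    by (cases "x = y") (simp_all add: bas_def)
  then show ?thesis
    by (intro aug_I[OF QL_diff[OF bas_QL[OF x] bas_QL[OF y]] _ s]) simp_all
qed

lemma decomp:
  assumes a: "a \<in> QL L"
  shows "a - sc (\<Sum>x\<in>supp a. a x) (bas e) \<in> aug_ideal L"
proof -
  let ?c = "\<Sum>x\<in>supp a. a x"
  have fin: "finite (insert e (supp a))" using a by (simp add: QL_iff)
  have s1: "(\<Sum>x\<in>insert e (supp a). a x) = ?c"
    by (rule sum.mono_neutral_right) (use a in \<open>auto simp: QL_iff supp_def\<close>)
  have "(\<Sum>x\<in>insert e (supp a). sc ?c (bas e) x) = (\<Sum>x\<in>insert e (supp a). if x = e then ?c else 0)"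
    by (rule sum.cong) (auto simp: sc_def bas_def)
  also have "\<dots> = ?c" using fin by (simp add: sum.delta)
  finally have s2: "(\<Sum>x\<in>insert e (supp a). sc ?c (bas e) x) = ?c" .
  show ?thesis
    apply (rule aug_I[OF _ fin])
    using a e_in apply (simp add: QL_diff QL_sc bas_QL)
    using supp_diff[of a "sc ?c (bas e)"] supp_sc[of ?c "bas e"] apply (auto simp: supp_bas)[1]
    using s1 s2 by (simp add: sum_subtractf)
qed

lemma bprods_QL: "bprods L pr i x \<Longrightarrow> x \<in> QL L"
  by (induction rule: bprods.induct) (auto simp: aug_QL QL_qprod)

lemma gen_ideal_QL: "S \<subseteq> QL L \<Longrightarrow> gen_ideal L pr S \<subseteq> QL L"
proof
  fix x assume SQ: "S \<subseteq> QL L" and x: "x \<in> gen_ideal L pr S"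
  from x show "x \<in> QL L"
  proof (induction rule: gen_ideal.induct)
    case (gen x) then show ?case using SQ by blast
  next
    case zero then show ?case using QL_zero by (simp add: zero_fun_def)
  next
    case (add x y) then show ?case using QL_add[of x L y] by (simp add: plus_fun_def)
  next
    case (smult x c) then show ?case using QL_sc[of x L c] by (simp add: sc_def)
  next
    case (lmult x a) then show ?case using QL_qprod by blast
  next
    case (rmult x a) then show ?case using QL_qprod by blast
  qed
qed

lemma sp_QL: "S \<subseteq> QL L \<Longrightarrow> sp S \<subseteq> QL L"
proof
  fix x assume SQ: "S \<subseteq> QL L" and x: "x \<in> sp S"
  from x show "x \<in> QL L"
  proof (induction rule: sp.induct)
    case (gen x) then show ?case using SQ by blast
  next
    case zero show ?case by (rule QL_zero)
  next
    case (add x y) show ?case by (rule QL_add[OF add.IH])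
  next
    case (smult x c) show ?case by (rule QL_sc[OF smult.IH])
  qed
qed

definition Sm :: "nat \<Rightarrow> ('a \<Rightarrow> rat) set" where "Sm m = {x. \<exists>i\<ge>m. bprods L pr i x}"

lemma Sm_QL: "Sm m \<subseteq> QL L" using bprods_QL by (auto simp: Sm_def)

lemma sp_mult:
  assumes "x \<in> sp (Sm m)" "a \<in> QL L"
  shows "qprod pr a x \<in> sp (Sm m) \<and> qprod pr x a \<in> sp (Sm m)"
  using assms(1)
proof (induction rule: sp.induct)
  case (gen x)
  then obtain i where i: "i \<ge> m" "bprods L pr i x" by (auto simp: Sm_def)
  have xQ: "x \<in> QL L" using i bprods_QL by auto
  let ?c = "\<Sum>x\<in>supp a. a x"
  define a' where "a' = a - sc ?c (bas e)"
  have a': "a' \<in> aug_ideal L" using decomp[OF assms(2)] a'_def by simp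
  have aeq: "a = sc ?c (bas e) + a'" by (simp add: a'_def)
  have fa': "fs a'" using a' aug_QL QL_fs by blast
  have fe: "fs (sc ?c (bas e))" by (rule fs_sc[OF fs_bas])
  have 1: "qprod pr a x = sc ?c x + qprod pr a' x"
    apply (subst aeq)
    apply (subst qprod_add_left[OF fe fa' QL_fs[OF xQ]])
    apply (subst qprod_sc_left[OF fs_bas QL_fs[OF xQ]])
    by (simp add: qprod_e_left[OF xQ])
  have 2: "qprod pr x a = sc ?c x + qprod pr x a'"
    apply (subst aeq)
    apply (subst qprod_add_right[OF QL_fs[OF xQ] fe fa'])
    apply (subst qprod_sc_right[OF QL_fs[OF xQ] fs_bas])
    by (simp add: qprod_e_right[OF xQ])
  have b1: "bprods L pr (1 + i) (qprod pr a' x)"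
    using bprods.prod[OF bprods.single[OF a'] i(2)] .
  have b2: "bprods L pr (i + 1) (qprod pr x a')"
    using bprods.prod[OF i(2) bprods.single[OF a']] .
  have xs: "x \<in> sp (Sm m)" using gen by (rule sp.gen)
  have "qprod pr a' x \<in> Sm m" unfolding Sm_def
    by (intro CollectI exI[of _ "1 + i"]) (use b1 i(1) in simp)
  moreover have "qprod pr x a' \<in> Sm m" unfolding Sm_def
    by (intro CollectI exI[of _ "i + 1"]) (use b2 i(1) in simp)
  ultimately have q1: "qprod pr a' x \<in> sp (Sm m)" and q2: "qprod pr x a' \<in> sp (Sm m)"
    by (auto intro: sp.gen)
  have r1: "sc ?c x + qprod pr a' x \<in> sp (Sm m)" by (rule sp.add[OF sp.smult[OF xs] q1])
  have r2: "sc ?c x + qprod pr x a' \<in> sp (Sm m)" by (rule sp.add[OF sp.smult[OF xs] q2])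
  show ?case unfolding 1 2 using r1 r2 by (rule conjI)
next
  case zero
  have h1: "qprod pr a 0 = 0" by (rule qprod_zero_right[OF QL_fs[OF assms(2)]])
  have h2: "qprod pr 0 a = 0" by (rule qprod_zero_left)
  show ?case unfolding h1 h2 by (intro conjI sp.zero)
next
  case (add x y)
  have fx: "fs x" "fs y" using add(1,2) sp_QL[OF Sm_QL] QL_fs by blast+
  have fa: "fs a" using QL_fs[OF assms(2)] .
  have e1: "qprod pr a (x + y) = qprod pr a x + qprod pr a y" by (rule qprod_add_right[OF fa fx])
  have e2: "qprod pr (x + y) a = qprod pr x a + qprod pr y a" by (rule qprod_add_left[OF fx fa])
  from add.IH have i1: "qprod pr a x \<in> sp (Sm m)" "qprod pr x a \<in> sp (Sm m)"
    "qprod pr a y \<in> sp (Sm m)" "qprod pr y a \<in> sp (Sm m)" by blast+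
  show ?case unfolding e1 e2 by (intro conjI sp.add i1)
next
  case (smult x c)
  have fx: "fs x" using smult(1) sp_QL[OF Sm_QL] QL_fs by blast
  have fa: "fs a" using QL_fs[OF assms(2)] .
  have e1: "qprod pr a (sc c x) = sc c (qprod pr a x)" by (rule qprod_sc_right[OF fa fx])
  have e2: "qprod pr (sc c x) a = sc c (qprod pr x a)" by (rule qprod_sc_left[OF fx fa])
  from smult.IH have i1: "qprod pr a x \<in> sp (Sm m)" "qprod pr x a \<in> sp (Sm m)" by blast+
  show ?case unfolding e1 e2 by (intro conjI sp.smult i1)
qed

lemma gen_ideal_sp: "gen_ideal L pr (Sm m) \<subseteq> sp (Sm m)"
proof
  fix x assume "x \<in> gen_ideal L pr (Sm m)"
  then show "x \<in> sp (Sm m)"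
  proof (induction rule: gen_ideal.induct)
    case (gen x) then show ?case by (rule sp.gen)
  next
    case zero then show ?case using sp.zero[of "Sm m"] by (simp add: zero_fun_def)
  next
    case (add x y) then show ?case using sp.add[of x "Sm m" y] by (simp add: plus_fun_def)
  next
    case (smult x c) then show ?case using sp.smult[of x "Sm m" c] by (simp add: sc_def)
  next
    case (lmult x a) then show ?case using sp_mult by blast
  next
    case (rmult x a) then show ?case using sp_mult by blast
  qed
qed


definition A :: "nat \<Rightarrow> ('a \<Rightarrow> rat) set" where
  "A m = (if m = 0 then QL L else aug_pow L pr m)"

lemma aug_pow_Sm: "aug_pow L pr m = gen_ideal L pr (Sm m)"
  by (simp add: aug_pow_def Sm_def)

lemma A_QL: "A m \<subseteq> QL L"
  using gen_ideal_QL[OF Sm_QL] by (auto simp: A_def aug_pow_Sm)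

lemma A_add: "f \<in> A m \<Longrightarrow> g \<in> A m \<Longrightarrow> f + g \<in> A m"
  by (auto simp: A_def aug_pow_Sm QL_add gi_add split: if_splits)
lemma A_sc: "f \<in> A m \<Longrightarrow> sc c f \<in> A m"
  by (auto simp: A_def aug_pow_Sm QL_sc gi_sc split: if_splits)
lemma A_diff: "f \<in> A m \<Longrightarrow> g \<in> A m \<Longrightarrow> f - g \<in> A m"
  by (simp add: diff_as A_add A_sc)
lemma A_zero: "0 \<in> A m"
  by (auto simp: A_def aug_pow_Sm QL_zero gi_zero)
lemma A_neg: "f \<in> A m \<Longrightarrow> - f \<in> A m"
  using A_diff[OF A_zero, of f m] by simp

lemma A_Suc: "A (Suc m) \<subseteq> A m"
proof (cases "m = 0")
  case True
  then show ?thesis using A_QL[of "Suc 0"] by (simp add: A_def)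
next
  case False
  have "Sm (Suc m) \<subseteq> Sm m" unfolding Sm_def using Suc_leD by blast
  then show ?thesis using False gen_ideal_mono by (simp add: A_def aug_pow_Sm)
qed

lemma A_anti: "i \<le> j \<Longrightarrow> A j \<subseteq> A i"
  by (induction j rule: dec_induct) (use A_Suc in auto)

lemma A4:
  assumes u: "u \<in> aug_ideal L" and f: "f \<in> A m"
  shows "qprod pr u f \<in> A (Suc m)"
proof (cases "m = 0")
  case True
  have "u \<in> Sm 1" using bprods.single[OF u] unfolding Sm_def
    by (metis (mono_tags) mem_Collect_eq order_refl)
  moreover have fQ: "f \<in> QL L" using f True by (simp add: A_def)
  ultimately have "qprod pr u f \<in> gen_ideal L pr (Sm 1)"
    by (intro gen_ideal.rmult gen_ideal.gen)
  then show ?thesis using True by (simp add: A_def aug_pow_Sm)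
next
  case False
  have fu: "fs u" using u aug_QL QL_fs by blast
  have "f \<in> sp (Sm m)" using f False gen_ideal_sp by (auto simp: A_def aug_pow_Sm)
  then have "qprod pr u f \<in> gen_ideal L pr (Sm (Suc m))"
  proof (induction rule: sp.induct)
    case (gen x)
    then obtain i where i: "i \<ge> m" "bprods L pr i x" by (auto simp: Sm_def)
    have "bprods L pr (1 + i) (qprod pr u x)" using bprods.prod[OF bprods.single[OF u] i(2)] .
    then show ?case using i(1) by (auto simp: Sm_def intro!: gen_ideal.gen)
  next
    case zero
    show ?case unfolding qprod_zero_right[OF fu] by (rule gi_zero)
  next
    case (add x y)
    have fx: "fs x" "fs y" using add(1,2) sp_QL[OF Sm_QL] QL_fs by blast+
    have e1: "qprod pr u (x + y) = qprod pr u x + qprod pr u y" by (rule qprod_add_right[OF fu fx])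
    show ?case unfolding e1 by (rule gi_add[OF add.IH])
  next
    case (smult x c)
    have fx: "fs x" using smult(1) sp_QL[OF Sm_QL] QL_fs by blast
    show ?case using smult(2) by (simp add: qprod_sc_right fx fu gi_sc)
  qed
  then show ?thesis by (simp add: A_def aug_pow_Sm)
qed

lemma T_step:
  assumes y: "y \<in> L" and f: "f \<in> A m"
  shows "qprod pr (bas y) f - f \<in> A (Suc m)"
proof -
  have fQ: "f \<in> QL L" using f A_QL by blast
  have "qprod pr (bas y) f - f = qprod pr (bas y - bas e) f"
    by (simp add: qprod_diff_left fs_bas QL_fs[OF fQ] qprod_e_left[OF fQ])
  then show ?thesis using A4[OF bas_diff_aug[OF y e_in] f] by simp
qed

lemma K:
  assumes y: "y \<in> L" and g: "g \<in> QL L" and h: "qprod pr (bas y) g \<in> A j"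
  shows "g \<in> A j"
proof -
  have "i \<le> j \<Longrightarrow> g \<in> A i" for i
  proof (induction i)
    case 0 then show ?case using g by (simp add: A_def)
  next
    case (Suc i)
    have gi: "g \<in> A i" using Suc by simp
    have 1: "qprod pr (bas y) g - g \<in> A (Suc i)" using T_step[OF y gi] .
    have 2: "qprod pr (bas y) g \<in> A (Suc i)" using h A_anti[OF Suc(2)] by blast
    have "g = qprod pr (bas y) g - (qprod pr (bas y) g - g)" by simp
    then show ?case using A_diff[OF 2 1] by metis
  qed
  then show ?thesis by simp
qed


definition push :: "('a \<Rightarrow> 'a) \<Rightarrow> ('a \<Rightarrow> rat) \<Rightarrow> ('a \<Rightarrow> rat)" where
  "push \<phi> f = (\<lambda>z. if z \<in> L then f (inv_into L \<phi> z) else 0)"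

lemma Bij_bij: "\<phi> \<in> Bij L \<Longrightarrow> bij_betw \<phi> L L" by (simp add: Bij_def)

lemma push_apply: "\<phi> \<in> Bij L \<Longrightarrow> x \<in> L \<Longrightarrow> push \<phi> f (\<phi> x) = f x"
  using Bij_bij[of \<phi>] unfolding push_def bij_betw_def
  by (auto simp: inv_into_f_f)

lemma push_out: "z \<notin> L \<Longrightarrow> push \<phi> f z = 0" by (simp add: push_def)

lemma push_eqI:
  assumes "\<phi> \<in> Bij L" "\<And>x. x \<in> L \<Longrightarrow> g (\<phi> x) = f x" "\<And>z. z \<notin> L \<Longrightarrow> g z = 0"
  shows "push \<phi> f = g"
proof
  fix z show "push \<phi> f z = g z"
  proof (cases "z \<in> L")
    case True
    have b: "bij_betw \<phi> L L" using assms(1) Bij_bij by blast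
    then have "z \<in> \<phi> ` L" using True by (simp add: bij_betw_def)
    then have "\<phi> (inv_into L \<phi> z) = z" "inv_into L \<phi> z \<in> L"
      by (auto simp: f_inv_into_f inv_into_into)
    then show ?thesis using assms(2)[of "inv_into L \<phi> z"] True by (simp add: push_def)
  next
    case False then show ?thesis using assms(3) by (simp add: push_def)
  qed
qed

lemma push_add: "push \<phi> (f + g) = push \<phi> f + push \<phi> g" by (auto simp: push_def fun_eq_iff)
lemma push_diff: "push \<phi> (f - g) = push \<phi> f - push \<phi> g" by (auto simp: push_def fun_eq_iff)

lemma push_QL: assumes "\<phi> \<in> Bij L" "f \<in> QL L" shows "push \<phi> f \<in> QL L"
proof -
  have "supp (push \<phi> f) \<subseteq> \<phi> ` supp f"
  proof
    fix z assume z: "z \<in> supp (push \<phi> f)"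
    then have zL: "z \<in> L" by (auto simp: supp_def push_def split: if_splits)
    have b: "bij_betw \<phi> L L" using assms(1) Bij_bij by blast
    then have "z \<in> \<phi> ` L" using zL by (simp add: bij_betw_def)
    then have "\<phi> (inv_into L \<phi> z) = z" by (simp add: f_inv_into_f)
    moreover have "inv_into L \<phi> z \<in> supp f" using z zL by (simp add: supp_def push_def)
    ultimately show "z \<in> \<phi> ` supp f" by (metis image_eqI)
  qed
  moreover have "\<phi> ` supp f \<subseteq> L" using assms Bij_bij[of \<phi>] by (auto simp: QL_iff bij_betw_def)
  ultimately show ?thesis using assms(2) unfolding QL_iff by (meson finite_imageI finite_subset order_trans)
qed

abbreviation "G \<equiv> BijGroup L"

lemma grp: "group G" by (rule group_BijGroup)

lemma G_mult: "x \<in> Bij L \<Longrightarrow> y \<in> Bij L \<Longrightarrow> x \<otimes>\<^bsub>G\<^esub> y = compose L x y"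
  by (simp add: BijGroup_def)

lemma push_mult:
  assumes "x \<in> carrier G" "y \<in> carrier G"
  shows "push (x \<otimes>\<^bsub>G\<^esub> y) f = push x (push y f)"
proof -
  have xy: "x \<in> Bij L" "y \<in> Bij L" using assms by (simp_all add: BijGroup_def)
  have c: "compose L x y \<in> Bij L" using compose_Bij[OF xy] .
  show ?thesis
    unfolding G_mult[OF xy]
  proof (rule push_eqI[OF c])
    fix z assume z: "z \<in> L"
    have yz: "y z \<in> L" using xy(2) z Bij_imp_funcset[of y L] by blast
    show "push x (push y f) (compose L x y z) = f z"
      using z yz xy by (simp add: compose_def push_apply)
  next
    fix z assume "z \<notin> L" then show "push x (push y f) z = 0" by (rule push_out)
  qed
qed

lemma push_one: "supp f \<subseteq> L \<Longrightarrow> push \<one>\<^bsub>G\<^esub> f = f"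
  apply (rule push_eqI) by (auto simp: BijGroup_def id_Bij supp_def)

lemma push_inv_cancel:
  assumes "x \<in> carrier G" "supp f \<subseteq> L"
  shows "push (inv\<^bsub>G\<^esub> x) (push x f) = f"
proof -
  have "push (inv\<^bsub>G\<^esub> x) (push x f) = push (inv\<^bsub>G\<^esub> x \<otimes>\<^bsub>G\<^esub> x) f"
    using push_mult[of "inv\<^bsub>G\<^esub> x" x f] assms group.inv_closed[OF grp] by simp
  also have "\<dots> = f" using group.l_inv[OF grp assms(1)] push_one[OF assms(2)] by simp
  finally show ?thesis .
qed

lemma push_bas: "\<phi> \<in> Bij L \<Longrightarrow> a \<in> L \<Longrightarrow> push \<phi> (bas a) = bas (\<phi> a)"
  apply (rule push_eqI)
  using Bij_bij[of \<phi>] Bij_imp_funcset[of \<phi> L]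
  by (auto simp: bas_def bij_betw_def inj_on_def)

lemma ltrans_Bij: "a \<in> L \<Longrightarrow> ltrans L pr a \<in> Bij L"
  using lbij[of a] by (simp add: Bij_def ltrans_def bij_betw_def inj_on_def)

lemma lm_apply:
  assumes a: "a \<in> L" and f: "f \<in> QL L" and x: "x \<in> L"
  shows "qprod pr (bas a) f (pr a x) = f x"
proof -
  have inj: "inj_on (\<lambda>x. pr a x) L" using lbij[OF a] by (simp add: bij_betw_def)
  have "qprod pr (bas a) f (pr a x) = (\<Sum>y\<in>supp f. if pr a y = pr a x then f y else 0)"
    by (simp add: qprod_bas_left[OF QL_fs[OF f]])
  also have "\<dots> = (\<Sum>y\<in>supp f. if y = x then f y else 0)"
    apply (rule sum.cong[OF refl]) using f x inj by (auto simp: QL_iff inj_on_def)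
  also have "\<dots> = f x" using f by (auto simp: QL_iff supp_def)
  finally show ?thesis .
qed

lemma lm_out:
  assumes a: "a \<in> L" and f: "f \<in> QL L" and z: "z \<notin> L"
  shows "qprod pr (bas a) f z = 0"
proof -
  have "qprod pr (bas a) f z = (\<Sum>y\<in>supp f. if pr a y = z then f y else 0)"
    by (simp add: qprod_bas_left[OF QL_fs[OF f]])
  also have "\<dots> = 0" apply (rule sum.neutral) using f a z pr_in by (auto simp: QL_iff)
  finally show ?thesis .
qed

lemma push_ltrans: "a \<in> L \<Longrightarrow> f \<in> QL L \<Longrightarrow> push (ltrans L pr a) f = qprod pr (bas a) f"
  apply (rule push_eqI[OF ltrans_Bij])
  by (auto simp: ltrans_def lm_apply lm_out)

definition Q :: "nat \<Rightarrow> ('a \<Rightarrow> 'a) \<Rightarrow> bool" where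
  "Q k \<phi> \<longleftrightarrow> (\<forall>m f. f \<in> A m \<longrightarrow> push \<phi> f - f \<in> A (m + k))"

definition P :: "nat \<Rightarrow> ('a \<Rightarrow> 'a) \<Rightarrow> bool" where
  "P k \<phi> \<longleftrightarrow> \<phi> \<in> carrier G \<and> Q k \<phi> \<and> Q k (inv\<^bsub>G\<^esub> \<phi>)"

lemma Q_pres: "Q k \<phi> \<Longrightarrow> f \<in> A m \<Longrightarrow> push \<phi> f \<in> A m"
proof -
  assume q: "Q k \<phi>" and f: "f \<in> A m"
  have "push \<phi> f - f \<in> A m" using q f A_anti[of m "m+k"] unfolding Q_def by auto
  then show ?thesis using A_add[OF _ f] by fastforce
qed

lemma Q_mult: "x \<in> carrier G \<Longrightarrow> y \<in> carrier G \<Longrightarrow> Q k x \<Longrightarrow> Q k y \<Longrightarrow> Q k (x \<otimes>\<^bsub>G\<^esub> y)"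
proof -
  assume xy: "x \<in> carrier G" "y \<in> carrier G" and q: "Q k x" "Q k y"
  show ?thesis unfolding Q_def
  proof (intro allI impI)
    fix m f assume f: "f \<in> A m"
    have 1: "push y f - f \<in> A (m + k)" using q(2) f by (simp add: Q_def)
    have 2: "push x (push y f) - push y f \<in> A (m + k)" using q(1) Q_pres[OF q(2) f] by (simp add: Q_def)
    have "push (x \<otimes>\<^bsub>G\<^esub> y) f - f = (push x (push y f) - push y f) + (push y f - f)"
      by (simp add: push_mult[OF xy])
    then show "push (x \<otimes>\<^bsub>G\<^esub> y) f - f \<in> A (m + k)" using A_add[OF 2 1] by simp
  qed
qed

lemma Q_one: "Q k \<one>\<^bsub>G\<^esub>"
  unfolding Q_def
proof (intro allI impI)
  fix m f assume f: "f \<in> A m"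
  have "f \<in> QL L" using A_QL[of m] f by blast
  then have "supp f \<subseteq> L" by (simp add: QL_iff)
  then show "push \<one>\<^bsub>G\<^esub> f - f \<in> A (m + k)" using push_one A_zero by simp
qed

lemma P_one: "P k \<one>\<^bsub>G\<^esub>"
  using Q_one monoid.one_closed[OF group.is_monoid[OF grp]] monoid.inv_one[OF group.is_monoid[OF grp]] by (simp add: P_def)

lemma P_inv: "P k x \<Longrightarrow> P k (inv\<^bsub>G\<^esub> x)"
  using group.inv_closed[OF grp] group.inv_inv[OF grp] by (simp add: P_def)

lemma P_mult: "P k x \<Longrightarrow> P k y \<Longrightarrow> P k (x \<otimes>\<^bsub>G\<^esub> y)"
  unfolding P_def
  using Q_mult group.inv_closed[OF grp] monoid.m_closed[OF group.is_monoid[OF grp]] group.inv_mult_group[OF grp]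
  by metis

lemma P_generate: "S \<subseteq> {x. P k x} \<Longrightarrow> x \<in> generate G S \<Longrightarrow> P k x"
proof -
  assume S: "S \<subseteq> {x. P k x}" and x: "x \<in> generate G S"
  from x show "P k x"
    by (induction rule: generate.induct) (use S P_one P_inv P_mult in auto)
qed


lemma carrier_G: "carrier G = Bij L" by (simp add: BijGroup_def)

lemma supp_push: "supp (push \<phi> f) \<subseteq> L" by (auto simp: supp_def push_def)

lemma comm_Q:
  assumes px: "P p x" and py: "P q y"
  shows "Q (p + q) (inv\<^bsub>G\<^esub> x \<otimes>\<^bsub>G\<^esub> inv\<^bsub>G\<^esub> y \<otimes>\<^bsub>G\<^esub> x \<otimes>\<^bsub>G\<^esub> y)"
  unfolding Q_def
proof (intro allI impI)
  fix m f assume f: "f \<in> A m"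
  have xc: "x \<in> carrier G" and yc: "y \<in> carrier G" using px py by (auto simp: P_def)
  have xi: "inv\<^bsub>G\<^esub> x \<in> carrier G" and yi: "inv\<^bsub>G\<^esub> y \<in> carrier G"
    using xc yc group.inv_closed[OF grp] by auto
  have Qx: "Q p x" "Q p (inv\<^bsub>G\<^esub> x)" and Qy: "Q q y" "Q q (inv\<^bsub>G\<^esub> y)" using px py by (auto simp: P_def)
  let ?x = "push x" and ?y = "push y" and ?x' = "push (inv\<^bsub>G\<^esub> x)" and ?y' = "push (inv\<^bsub>G\<^esub> y)"
  have pc: "push (inv\<^bsub>G\<^esub> x \<otimes>\<^bsub>G\<^esub> inv\<^bsub>G\<^esub> y \<otimes>\<^bsub>G\<^esub> x \<otimes>\<^bsub>G\<^esub> y) f = ?x' (?y' (?x (?y f)))"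
    using xc yc xi yi monoid.m_closed[OF group.is_monoid[OF grp]] by (simp add: push_mult)
  define g where "g = ?x (?y f) - ?y (?x f)"
  have fQ: "f \<in> QL L" using A_QL[of m] f by blast
  then have fs: "supp f \<subseteq> L" by (simp add: QL_iff)
  have c1: "?y' (?y (?x f)) = ?x f" by (rule push_inv_cancel[OF yc supp_push])
  have canc: "?x' (?y' (?y (?x f))) = f"
    unfolding c1 by (rule push_inv_cancel[OF xc fs])
  have eq: "?x' (?y' g) = ?x' (?y' (?x (?y f))) - f"
    unfolding g_def push_diff canc ..
  define h1 where "h1 = ?y f - f"
  define h2 where "h2 = ?x f - f"
  have h1: "h1 \<in> A (m + q)" using Qy f by (simp add: Q_def h1_def)
  have h2: "h2 \<in> A (m + p)" using Qx f by (simp add: Q_def h2_def)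
  have a1: "?x h1 - h1 \<in> A (m + p + q)" using Qx(1) h1 unfolding Q_def by (metis add.commute add.assoc)
  have a2: "?y h2 - h2 \<in> A (m + p + q)" using Qy(1) h2 unfolding Q_def by (metis add.assoc)
  have "g = (?x h1 - h1) - (?y h2 - h2)"
    by (simp add: g_def h1_def h2_def push_diff algebra_simps)
  then have g: "g \<in> A (m + p + q)" using A_diff[OF a1 a2] by simp
  have "?x' (?y' g) \<in> A (m + p + q)" using Q_pres[OF Qx(2) Q_pres[OF Qy(2) g]] .
  then show "push (inv\<^bsub>G\<^esub> x \<otimes>\<^bsub>G\<^esub> inv\<^bsub>G\<^esub> y \<otimes>\<^bsub>G\<^esub> x \<otimes>\<^bsub>G\<^esub> y) f - f \<in> A (m + (p + q))"
    using pc eq by (simp add: add.assoc)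
qed

lemma comm_P:
  assumes px: "P p x" and py: "P q y"
  shows "P (p + q) (inv\<^bsub>G\<^esub> x \<otimes>\<^bsub>G\<^esub> inv\<^bsub>G\<^esub> y \<otimes>\<^bsub>G\<^esub> x \<otimes>\<^bsub>G\<^esub> y)"
proof -
  have xc: "x \<in> carrier G" and yc: "y \<in> carrier G" using px py by (auto simp: P_def)
  interpret g: group G by (rule grp)
  have inv: "inv\<^bsub>G\<^esub> (inv\<^bsub>G\<^esub> x \<otimes>\<^bsub>G\<^esub> inv\<^bsub>G\<^esub> y \<otimes>\<^bsub>G\<^esub> x \<otimes>\<^bsub>G\<^esub> y)
      = inv\<^bsub>G\<^esub> y \<otimes>\<^bsub>G\<^esub> inv\<^bsub>G\<^esub> x \<otimes>\<^bsub>G\<^esub> y \<otimes>\<^bsub>G\<^esub> x"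
    using xc yc by (simp add: g.inv_mult_group g.m_assoc)
  show ?thesis
    unfolding P_def inv
    using comm_Q[OF px py] comm_Q[OF py px] xc yc by (simp add: add.commute)
qed

lemma P_ltrans: assumes a: "a \<in> L" shows "P 1 (ltrans L pr a)"
proof -
  have lc: "ltrans L pr a \<in> carrier G" using ltrans_Bij[OF a] carrier_G by simp
  have q1: "Q 1 (ltrans L pr a)" unfolding Q_def
  proof (intro allI impI)
    fix m f assume f: "f \<in> A m"
    have fQ: "f \<in> QL L" using A_QL[of m] f by blast
    show "push (ltrans L pr a) f - f \<in> A (m + 1)"
      using T_step[OF a f] push_ltrans[OF a fQ] by simp
  qed
  have q2: "Q 1 (inv\<^bsub>G\<^esub> ltrans L pr a)" unfolding Q_def
  proof (intro allI impI)
    fix m f assume f: "f \<in> A m"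
    let ?\<psi> = "inv\<^bsub>G\<^esub> ltrans L pr a"
    have \<psi>c: "?\<psi> \<in> carrier G" using lc group.inv_closed[OF grp] by blast
    have fQ: "f \<in> QL L" using f A_QL by blast
    define g where "g = push ?\<psi> f"
    have gQ: "g \<in> QL L" using push_QL[of ?\<psi> f] \<psi>c fQ carrier_G by (simp add: g_def)
    have "push (ltrans L pr a) g = push (ltrans L pr a \<otimes>\<^bsub>G\<^esub> ?\<psi>) f"
      using push_mult[OF lc \<psi>c] by (simp add: g_def)
    also have "\<dots> = f" using group.r_inv[OF grp lc] push_one fQ by (simp add: QL_iff)
    finally have lg: "qprod pr (bas a) g = f" using push_ltrans[OF a gQ] by simp
    have gA: "g \<in> A m" using K[OF a gQ] lg f by simp
    have "f - g \<in> A (Suc m)" using T_step[OF a gA] lg by simp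
    then have "g - f \<in> A (Suc m)" using A_neg by fastforce
    then show "push ?\<psi> f - f \<in> A (m + 1)" by (simp add: g_def)
  qed
  show ?thesis using lc q1 q2 by (simp add: P_def)
qed

lemma lcs_P: "\<phi> \<in> lcs G (LMlt L pr) (Suc k) \<Longrightarrow> P (Suc k) \<phi>"
proof (induction k arbitrary: \<phi>)
  case 0
  then show ?case using P_generate[of "ltrans L pr ` L" 1 \<phi>] P_ltrans by (auto simp: LMlt_def)
next
  case (Suc k)
  have H: "x \<in> LMlt L pr \<Longrightarrow> P 1 x" for x
    using P_generate[of "ltrans L pr ` L" 1 x] P_ltrans by (auto simp: LMlt_def)
  have gens: "(\<Union>a\<in>LMlt L pr. \<Union>b\<in>lcs G (LMlt L pr) (Suc k).
      {inv\<^bsub>G\<^esub> a \<otimes>\<^bsub>G\<^esub> inv\<^bsub>G\<^esub> b \<otimes>\<^bsub>G\<^esub> a \<otimes>\<^bsub>G\<^esub> b}) \<subseteq> {x. P (Suc (Suc k)) x}"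
    using comm_P[OF H Suc.IH] by auto
  show ?case using Suc.prems P_generate[OF gens] by (simp add: comm_subgroup_def)
qed

lemma coset_sub:
  assumes n: "n \<ge> 1" and x: "x \<in> L" and y: "y \<in> L" and xy: "bas x - bas y \<in> A n"
  shows "lcoset pr x (Dsub L pr e n) \<subseteq> lcoset pr y (Dsub L pr e n)"
proof
  fix z assume "z \<in> lcoset pr x (Dsub L pr e n)"
  then obtain d where dD: "d \<in> Dsub L pr e n" and z: "z = pr x d"
    by (auto simp: lcoset_def)
  then have d: "d \<in> L" "bas d - bas e \<in> A n"
    using n by (simp_all add: Dsub_def A_def fun_diff_def)
  have "pr x d \<in> (\<lambda>w. pr y w) ` L" using lbij[OF y] pr_in[OF x d(1)] by (simp add: bij_betw_def)
  then obtain d' where d': "d' \<in> L" "pr y d' = pr x d" by auto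
  have e1: "qprod pr (bas y) (bas d' - bas e) = bas (pr y d') - bas y"
    by (simp add: qprod_diff_right fs_bas qprod_bas_bas e_right[OF y])
  have e2: "qprod pr (bas x) (bas d - bas e) = bas (pr x d) - bas x"
    by (simp add: qprod_diff_right fs_bas qprod_bas_bas e_right[OF x])
  have "bas d - bas e \<in> gen_ideal L pr (Sm n)" using d(2) n by (simp add: A_def aug_pow_Sm)
  then have "qprod pr (bas x) (bas d - bas e) \<in> gen_ideal L pr (Sm n)"
    by (rule gen_ideal.lmult[OF _ bas_QL[OF x]])
  then have "qprod pr (bas x) (bas d - bas e) \<in> A n" using n by (simp add: A_def aug_pow_Sm)
  then have s: "qprod pr (bas x) (bas d - bas e) + (bas x - bas y) \<in> A n" by (rule A_add[OF _ xy])
  have "qprod pr (bas y) (bas d' - bas e) = qprod pr (bas x) (bas d - bas e) + (bas x - bas y)"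
    unfolding e1 e2 d'(2) by (simp only: add_diff_eq diff_add_cancel)
  then have "qprod pr (bas y) (bas d' - bas e) \<in> A n" using s by (simp only:)
  moreover have "bas d' - bas e \<in> QL L" by (rule QL_diff[OF bas_QL[OF d'(1)] bas_QL[OF e_in]])
  ultimately have "bas d' - bas e \<in> A n" using K[OF y] by blast
  then have "d' \<in> Dsub L pr e n" using d'(1) n by (simp add: Dsub_def A_def fun_diff_def)
  then have "pr y d' \<in> lcoset pr y (Dsub L pr e n)" unfolding lcoset_def by (rule imageI)
  then show "z \<in> lcoset pr y (Dsub L pr e n)" using z d'(2) by simp
qed

end

theorem lemma3p2:
  fixes L :: "'a set" and pr :: "'a \<Rightarrow> 'a \<Rightarrow> 'a" and e :: 'a and n :: nat
  assumes "is_loop L pr e" and "n \<ge> 1"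
    and "a \<in> L" and "F \<in> lcs (BijGroup L) (LMlt L pr) n"
  shows "lcoset pr (F a) (Dsub L pr e n) = lcoset pr a (Dsub L pr e n)"
proof -
  interpret lp L pr e using assms(1) by (rule lp.intro)
  obtain k where k: "n = Suc k" using assms(2) by (cases n) auto
  have PF: "P n F" using lcs_P assms(4) k by simp
  have Fb: "F \<in> Bij L" using PF by (simp add: P_def carrier_G)
  have FaL: "F a \<in> L" using Fb assms(3) Bij_imp_funcset by blast
  have ba: "bas a \<in> A 0" using bas_QL[OF assms(3)] by (simp add: A_def)
  have "push F (bas a) - bas a \<in> A (0 + n)"
    using PF ba unfolding P_def Q_def by blast
  then have d1: "bas (F a) - bas a \<in> A n" using push_bas[OF Fb assms(3)] by simp
  then have d2: "bas a - bas (F a) \<in> A n" using A_neg by fastforce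
  show ?thesis
    using coset_sub[OF assms(2) FaL assms(3) d1] coset_sub[OF assms(2) assms(3) FaL d2] by blast
qed

end
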